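(* Let $R$ and $B$ be disjoint finite sets of points in the plane such that no three points of $R\cup B$ are collinear, and let $f:R\to\{2,3,4,\ldots\}$ be a function. If $|B|=\sum_{x\in R}(f(x)-2)+2$, then there exists a non-crossing geometric spanning tree $T$ on $R\cup B$ such that the set of leaves of $T$ is exactly $B$ and $\deg_T(x)=f(x)$ for every $x\in R$.
   Context: A geometric spanning tree on a point set $P$ is a tree with vertex set $P$ whose edges are drawn as straight-line segments between their endpoints; it is non-crossing if no two edges intersect except at a common endpoint. $\deg_T(v)$ denotes the degree of vertex $v$ in $T$, and a leaf is a vertex of degree one. *)

theory Defs
  imports "HOL-Analysis.Analysis"
begin

type_synonym point = "real \<times> real"

definition adj :: "'a set set \<Rightarrow> 'a \<Rightarrow> 'a \<Rightarrow> bool" where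
  "adj E u v \<longleftrightarrow> {u, v} \<in> E \<and> u \<noteq> v"

definition graph_on :: "'a set \<Rightarrow> 'a set set \<Rightarrow> bool" where
  "graph_on V E \<longleftrightarrow> (\<forall>e\<in>E. e \<subseteq> V \<and> card e = 2)"

definition connected_graph :: "'a set \<Rightarrow> 'a set set \<Rightarrow> bool" where
  "connected_graph V E \<longleftrightarrow> (\<forall>u\<in>V. \<forall>v\<in>V. (adj E)\<^sup>*\<^sup>* u v)"

definition is_cycle :: "'a set set \<Rightarrow> 'a list \<Rightarrow> bool" where
  "is_cycle E vs \<longleftrightarrow> length vs \<ge> 3 \<and> distinct vs \<and>
     (\<forall>i. Suc i < length vs \<longrightarrow> adj E (vs ! i) (vs ! Suc i)) \<and>
     adj E (last vs) (hd vs)"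

definition is_tree :: "'a set \<Rightarrow> 'a set set \<Rightarrow> bool" where
  "is_tree V E \<longleftrightarrow> graph_on V E \<and> connected_graph V E \<and> (\<nexists>vs. is_cycle E vs)"

definition degree :: "'a set set \<Rightarrow> 'a \<Rightarrow> nat" where
  "degree E v = card {e \<in> E. v \<in> e}"

definition leaves :: "'a set \<Rightarrow> 'a set set \<Rightarrow> 'a set" where
  "leaves V E = {v \<in> V. degree E v = 1}"

definition non_crossing :: "point set set \<Rightarrow> bool" where
  "non_crossing E \<longleftrightarrow> (\<forall>a b c d. {a, b} \<in> E \<longrightarrow> {c, d} \<in> E \<longrightarrow> {a, b} \<noteq> {c, d} \<longrightarrow>
      closed_segment a b \<inter> closed_segment c d \<subseteq> {a, b} \<inter> {c, d})"

definition no_three_collinear :: "point set \<Rightarrow> bool" where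
  "no_three_collinear P \<longleftrightarrow> (\<forall>S \<subseteq> P. card S = 3 \<longrightarrow> \<not> collinear S)"

end

theory Submission
  imports Defs
begin


definition cross :: "point \<Rightarrow> point \<Rightarrow> real" where
  "cross u w = fst u * snd w - snd u * fst w"

lemma ntc_subset: "no_three_collinear P \<Longrightarrow> S \<subseteq> P \<Longrightarrow> no_three_collinear S"
  unfolding no_three_collinear_def by blast

lemma ntc_three:
  assumes "no_three_collinear P" "a \<in> P" "b \<in> P" "c \<in> P" "a \<noteq> b" "a \<noteq> c" "b \<noteq> c"
  shows "\<not> collinear {a, b, c}"
  using assms unfolding no_three_collinear_def
  by (metis (no_types, lifting) card_3_iff empty_subsetI insert_subset)

lemma seg_endpoint:
  assumes "no_three_collinear P" "a \<in> P" "b \<in> P" "x \<in> P" "a \<noteq> b"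
    "x \<in> closed_segment a b"
  shows "x = a \<or> x = b"
proof (rule ccontr)
  assume "\<not> (x = a \<or> x = b)"
  then have "\<not> collinear {a, x, b}" using ntc_three[OF assms(1,2,4,3)] assms(5) by auto
  moreover have "collinear {a, x, b}"
    using assms(6) between_imp_collinear between_mem_segment by blast
  ultimately show False by blast
qed

lemma cross_nz:
  assumes "no_three_collinear P" "a \<in> P" "b \<in> P" "c \<in> P" "a \<noteq> b" "a \<noteq> c" "b \<noteq> c"
  shows "cross (b - a) (c - a) \<noteq> 0"
proof
  assume h: "cross (b - a) (c - a) = 0"
  define u where "u = b - a"
  define z where "z = c - a"
  have u0: "u \<noteq> 0" using assms(5) unfolding u_def by auto
  have h': "fst u * snd z = snd u * fst z" using h unfolding cross_def u_def z_def by simp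
  have "\<exists>t. z = t *\<^sub>R u"
  proof (cases "fst u = 0")
    case True
    then have "snd u \<noteq> 0" using u0 by (simp add: prod_eq_iff)
    then have "fst z = 0" using h' True by simp
    show ?thesis
      apply (rule exI[of _ "snd z / snd u"])
      using True \<open>snd u \<noteq> 0\<close> \<open>fst z = 0\<close> by (simp add: prod_eq_iff)
  next
    case False
    show ?thesis
      apply (rule exI[of _ "fst z / fst u"])
      using False h' by (simp add: prod_eq_iff field_simps)
  qed
  then have "collinear {0, u, z}" using collinear_lemma by blast
  then have "collinear {b, a, c}"
    using collinear_3[of b a c] unfolding u_def z_def by simp
  then have "collinear {a, b, c}" by (simp add: insert_commute)
  then show False using ntc_three[OF assms] by blast
qed



lemma cycle_rotate1:
  assumes "is_cycle E vs" shows "is_cycle E (rotate1 vs)"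
proof -
  have l3: "length vs \<ge> 3" using assms unfolding is_cycle_def by auto
  then obtain x xs where vs: "vs = x # xs" by (cases vs) auto
  have len: "length xs \<ge> 2" using l3 vs by auto
  have c: "\<And>i. Suc i < length vs \<Longrightarrow> adj E (vs ! i) (vs ! Suc i)"
    and w: "adj E (last vs) (hd vs)" using assms unfolding is_cycle_def by auto
  have "adj E ((xs @ [x]) ! i) ((xs @ [x]) ! Suc i)" if "Suc i < length (xs @ [x])" for i
  proof (cases "Suc i < length xs")
    case True
    then show ?thesis using c[of "Suc i"] vs by (simp add: nth_append)
  next
    case False
    then have "Suc i = length xs" using that by simp
    then have ii: "i = length xs - 1" by simp
    then have "(xs @ [x]) ! i = last vs" "(xs @ [x]) ! Suc i = hd vs"
      using vs len ii by (auto simp: nth_append last_conv_nth)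
    then show ?thesis using w by simp
  qed
  moreover have "adj E (last (xs @ [x])) (hd (xs @ [x]))"
    using c[of 0] vs len by (cases xs) auto
  ultimately show ?thesis using assms vs unfolding is_cycle_def by auto
qed

lemma cycle_rotate: "is_cycle E vs \<Longrightarrow> is_cycle E (rotate n vs)"
  by (induction n) (auto intro: cycle_rotate1)

lemma cycle_in_V:
  assumes "is_cycle E vs" "graph_on V E" shows "set vs \<subseteq> V"
proof
  fix x assume "x \<in> set vs"
  then obtain i where i: "i < length vs" "vs ! i = x" by (auto simp: in_set_conv_nth)
  have ad: "\<And>a b. adj E a b \<Longrightarrow> a \<in> V" using assms(2) unfolding adj_def graph_on_def by blast
  show "x \<in> V"
  proof (cases "Suc i < length vs")
    case True
    then have "adj E (vs ! i) (vs ! Suc i)" using assms(1) unfolding is_cycle_def by blast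
    then show ?thesis using ad i by blast
  next
    case False
    then have "i = length vs - 1" using i by simp
    moreover have "vs \<noteq> []" using i by auto
    ultimately have "x = last vs" using i by (simp add: last_conv_nth)
    moreover have "adj E (last vs) (hd vs)" using assms(1) unfolding is_cycle_def by blast
    ultimately show ?thesis using ad by blast
  qed
qed

lemma path_sides:
  assumes "\<And>i. Suc i < length xs \<Longrightarrow> adj (Ea \<union> Eb) (xs ! i) (xs ! Suc i)"
    and "v \<notin> set xs" and "graph_on X Ea" and "graph_on Y Eb" and "X \<inter> Y = {v}"
    and "set xs \<subseteq> X \<union> Y"
  shows "set xs \<subseteq> X \<or> set xs \<subseteq> Y"
proof -
  have step: "(a \<in> X \<longleftrightarrow> b \<in> X)"
    if "adj (Ea \<union> Eb) a b" "a \<noteq> v" "b \<noteq> v" for a b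
  proof -
    have "{a, b} \<in> Ea \<or> {a, b} \<in> Eb" using that unfolding adj_def by auto
    then show ?thesis
    proof
      assume "{a, b} \<in> Ea"
      then have "{a, b} \<subseteq> X" using assms(3) unfolding graph_on_def by blast
      then show ?thesis by simp
    next
      assume "{a, b} \<in> Eb"
      then have "{a, b} \<subseteq> Y" using assms(4) unfolding graph_on_def by blast
      then have "a \<notin> X" "b \<notin> X" using assms(5) that(2,3) by auto
      then show ?thesis by simp
    qed
  qed
  have inv: "(xs ! i \<in> X \<longleftrightarrow> xs ! 0 \<in> X)" if "i < length xs" for i
    using that
  proof (induction i)
    case 0
    show ?case by simp
  next
    case (Suc i)
    have a: "adj (Ea \<union> Eb) (xs ! i) (xs ! Suc i)" using assms(1) Suc.prems by blast
    have "xs ! i \<noteq> v" "xs ! Suc i \<noteq> v" using assms(2) Suc.prems nth_mem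
      by (metis Suc_lessD)+
    then show ?case using step[OF a] Suc by simp
  qed
  show ?thesis
  proof (cases "xs ! 0 \<in> X")
    case True
    then show ?thesis using inv by (metis in_set_conv_nth subsetI)
  next
    case False
    then have "\<forall>x\<in>set xs. x \<notin> X" using inv by (metis in_set_conv_nth)
    then show ?thesis using assms(6) by blast
  qed
qed

lemma glue_acyclic:
  assumes "is_tree X Ea" "is_tree Y Eb" "X \<inter> Y = {v}"
  shows "\<nexists>vs. is_cycle (Ea \<union> Eb) vs"
proof
  assume "\<exists>vs. is_cycle (Ea \<union> Eb) vs"
  then obtain vs where cy: "is_cycle (Ea \<union> Eb) vs" by blast
  have gX: "graph_on X Ea" and gY: "graph_on Y Eb" using assms unfolding is_tree_def by auto
  have gU: "graph_on (X \<union> Y) (Ea \<union> Eb)" using gX gY unfolding graph_on_def by blast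
  have inV: "set vs \<subseteq> X \<union> Y" using cycle_in_V[OF cy gU] .
  have sides: "set vs \<subseteq> X \<or> set vs \<subseteq> Y"
  proof (cases "v \<in> set vs")
    case False
    show ?thesis
      apply (rule path_sides[OF _ False gX gY assms(3) inV])
      using cy unfolding is_cycle_def by auto
  next
    case True
    then obtain j where j: "j < length vs" "vs ! j = v" by (auto simp: in_set_conv_nth)
    define ws where "ws = rotate j vs"
    have cw: "is_cycle (Ea \<union> Eb) ws" unfolding ws_def using cycle_rotate[OF cy] .
    have ne: "vs \<noteq> []" using j by auto
    have hw: "hd ws = v" unfolding ws_def using hd_rotate_conv_nth[OF ne, of j] j by simp
    have lw: "length ws \<ge> 3" "distinct ws" using cw unfolding is_cycle_def by auto
    then obtain rest where wsr: "ws = v # rest" using hw by (cases ws) auto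
    have sw: "set ws = set vs" unfolding ws_def by simp
    have "set rest \<subseteq> X \<or> set rest \<subseteq> Y"
    proof (rule path_sides[OF _ _ gX gY assms(3)])
      show "adj (Ea \<union> Eb) (rest ! i) (rest ! Suc i)" if "Suc i < length rest" for i
      proof -
        have "Suc (Suc i) < length ws" using that wsr by simp
        then have "adj (Ea \<union> Eb) (ws ! Suc i) (ws ! Suc (Suc i))"
          using cw unfolding is_cycle_def by blast
        then show ?thesis using wsr by simp
      qed
      show "v \<notin> set rest" using lw(2) wsr by simp
      show "set rest \<subseteq> X \<union> Y" using inV sw wsr by auto
    qed
    then show ?thesis using sw wsr assms(3) by auto
  qed
  have lift: "adj E1 a b" if "adj (E1 \<union> E2) a b" "a \<in> Z" "b \<in> Z" "graph_on W E2"
      "Z \<inter> W = {v}" for E1 E2 a b Z W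
  proof -
    have "{a, b} \<notin> E2"
    proof
      assume "{a, b} \<in> E2"
      then have "a \<in> W" "b \<in> W" using that(4) unfolding graph_on_def by auto
      then have "a = b" using that(2,3,5) by (metis IntI singletonD)
      then show False using that(1) unfolding adj_def by simp
    qed
    then show ?thesis using that(1) unfolding adj_def by auto
  qed
  show False
  proof (cases "set vs \<subseteq> X")
    case True
    have "is_cycle Ea vs"
      using cy unfolding is_cycle_def
    proof (intro conjI allI impI)
      fix i assume "Suc i < length vs"
      then have "adj (Ea \<union> Eb) (vs ! i) (vs ! Suc i)" "vs ! i \<in> X" "vs ! Suc i \<in> X"
        using cy True unfolding is_cycle_def by (auto dest: Suc_lessD)
      then show "adj Ea (vs ! i) (vs ! Suc i)" using lift[OF _ _ _ gY assms(3)] by blast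
    next
      have "vs \<noteq> []" using cy unfolding is_cycle_def by auto
      then have "adj (Ea \<union> Eb) (last vs) (hd vs)" "last vs \<in> X" "hd vs \<in> X"
        using cy True unfolding is_cycle_def by auto
      then show "adj Ea (last vs) (hd vs)" using lift[OF _ _ _ gY assms(3)] by blast
    qed auto
    then show False using assms(1) unfolding is_tree_def by blast
  next
    case False
    then have T: "set vs \<subseteq> Y" using sides by blast
    have Y3: "Y \<inter> X = {v}" using assms(3) by blast
    have "is_cycle Eb vs"
      using cy unfolding is_cycle_def
    proof (intro conjI allI impI)
      fix i assume "Suc i < length vs"
      then have "adj (Eb \<union> Ea) (vs ! i) (vs ! Suc i)" "vs ! i \<in> Y" "vs ! Suc i \<in> Y"
        using cy T unfolding is_cycle_def by (auto simp: sup_commute dest: Suc_lessD)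
      then show "adj Eb (vs ! i) (vs ! Suc i)" using lift[OF _ _ _ gX Y3] by blast
    next
      have "vs \<noteq> []" using cy unfolding is_cycle_def by auto
      then have "adj (Eb \<union> Ea) (last vs) (hd vs)" "last vs \<in> Y" "hd vs \<in> Y"
        using cy T unfolding is_cycle_def by (auto simp: sup_commute)
      then show "adj Eb (last vs) (hd vs)" using lift[OF _ _ _ gX Y3] by blast
    qed auto
    then show False using assms(2) unfolding is_tree_def by blast
  qed
qed



lemma seg_affine:
  assumes lin: "\<And>a b t. lf ((1 - t) *\<^sub>R a + t *\<^sub>R b) = (1 - t) * lf a + t * lf b"
    and "x \<in> closed_segment a b"
  obtains t where "0 \<le> t" "t \<le> 1" "x = (1 - t) *\<^sub>R a + t *\<^sub>R b"
    "lf x = (1 - t) * lf a + t * lf b"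
  using assms(2) lin unfolding closed_segment_def by blast

lemma seg_ge:
  assumes lin: "\<And>a b t. lf ((1 - t) *\<^sub>R a + t *\<^sub>R b) = (1 - t) * lf a + t * lf b"
    and "x \<in> closed_segment a b" "lf a \<ge> c" "lf b \<ge> c"
  shows "lf x \<ge> c"
proof -
  obtain t where t: "0 \<le> t" "t \<le> 1" "lf x = (1 - t) * lf a + t * lf b"
    using seg_affine[OF lin assms(2)] by blast
  have "(1 - t) * lf a \<ge> (1 - t) * c" using t assms(3) by (simp add: mult_left_mono)
  moreover have "t * lf b \<ge> t * c" using t assms(4) by (simp add: mult_left_mono)
  ultimately show ?thesis using t by (simp add: algebra_simps)
qed

lemma seg_le_v:
  assumes lin: "\<And>a b t. lf ((1 - t) *\<^sub>R a + t *\<^sub>R b) = (1 - t) * lf a + t * lf b"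
    and "x \<in> closed_segment a b" "lf x \<ge> c"
    and "a = v \<or> lf a < c" "b = v \<or> lf b < c" "lf v = c" "a \<noteq> b"
  shows "x = v"
proof -
  obtain t where t: "0 \<le> t" "t \<le> 1" "x = (1 - t) *\<^sub>R a + t *\<^sub>R b"
    "lf x = (1 - t) * lf a + t * lf b"
    using seg_affine[OF lin assms(2)] by blast
  consider "a = v" | "b = v" | "lf a < c" "lf b < c" using assms(4,5) by blast
  then show ?thesis
  proof cases
    case 1
    then have "b \<noteq> v" using assms(7) by simp
    then have "lf b < c" using assms(5) by simp
    have "t * (lf b - c) \<ge> 0" using t assms(3,6) 1 by (simp add: algebra_simps)
    then have "t = 0" using \<open>lf b < c\<close> t(1) by (smt (verit) mult_pos_neg)
    then show ?thesis using t 1 by simp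
  next
    case 2
    then have "a \<noteq> v" using assms(7) by simp
    then have "lf a < c" using assms(4) by simp
    have "(1 - t) * (lf a - c) \<ge> 0" using t assms(3,6) 2 by (simp add: algebra_simps)
    then have "1 - t = 0" using \<open>lf a < c\<close> t(2) by (smt (verit) mult_pos_neg)
    then show ?thesis using t 2 by simp
  next
    case 3
    have "(1 - t) * lf a \<le> (1 - t) * c" using t 3 by (simp add: mult_left_mono)
    moreover have "t * lf b \<le> t * c" using t 3 by (simp add: mult_left_mono)
    moreover have "(1 - t) * lf a < (1 - t) * c \<or> t * lf b < t * c"
      using t 3 by (cases "t = 0") auto
    ultimately have "lf x < c" using t by (simp add: algebra_simps) linarith
    then show ?thesis using assms(3) by simp
  qed
qed

lemma edge_card: "graph_on V E \<Longrightarrow> {a, b} \<in> E \<Longrightarrow> a \<noteq> b \<and> a \<in> V \<and> b \<in> V"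
proof -
  assume a: "graph_on V E" "{a, b} \<in> E"
  then have "card {a, b} = 2" "{a, b} \<subseteq> V" unfolding graph_on_def by auto
  moreover have "a \<noteq> b" using calculation(1) by (cases "a = b") auto
  ultimately show ?thesis by simp
qed

lemma degree_out: "graph_on V E \<Longrightarrow> x \<notin> V \<Longrightarrow> degree E x = 0"
proof -
  assume a: "graph_on V E" "x \<notin> V"
  then have "{e \<in> E. x \<in> e} = {}" unfolding graph_on_def by blast
  then show ?thesis unfolding degree_def by (metis card.empty)
qed

lemma graph_finite: "graph_on V E \<Longrightarrow> finite V \<Longrightarrow> finite E"
proof -
  assume a: "graph_on V E" "finite V"
  then have "E \<subseteq> Pow V" unfolding graph_on_def by blast
  then show ?thesis using a(2) finite_subset by blast
qed

lemma glue:
  assumes XY: "X \<union> Y = P" "X \<inter> Y = {v}" and ntc: "no_three_collinear P"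
    and lin: "\<And>a b t. lf ((1 - t) *\<^sub>R a + t *\<^sub>R b) = (1 - t) * lf a + t * lf b"
    and sY: "\<forall>y\<in>Y. lf y \<ge> c" and sX: "\<forall>x\<in>X-{v}. lf x < c" and sv: "lf v = c"
    and tX: "is_tree X Ea" "non_crossing Ea" "\<forall>x\<in>X. degree Ea x = gX x"
    and tY: "is_tree Y Eb" "non_crossing Eb" "\<forall>y\<in>Y. degree Eb y = gY y"
    and gg: "\<forall>x\<in>X-{v}. g x = gX x" "\<forall>y\<in>Y-{v}. g y = gY y" "g v = gX v + gY v"
    and fin: "finite P"
  shows "\<exists>E. is_tree P E \<and> non_crossing E \<and> (\<forall>x\<in>P. degree E x = g x)"
proof (intro exI conjI)
  have gX: "graph_on X Ea" and gY: "graph_on Y Eb" using tX tY unfolding is_tree_def by auto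
  have cX: "connected_graph X Ea" and cY: "connected_graph Y Eb"
    using tX tY unfolding is_tree_def by auto
  have vX: "v \<in> X" and vY: "v \<in> Y" using XY by auto
  show "is_tree P (Ea \<union> Eb)"
    unfolding is_tree_def
  proof (intro conjI)
    show "graph_on P (Ea \<union> Eb)" using gX gY XY unfolding graph_on_def by blast
    have m1: "(adj Ea)\<^sup>*\<^sup>* a b \<Longrightarrow> (adj (Ea \<union> Eb))\<^sup>*\<^sup>* a b" for a b
      by (rule mono_rtranclp[rule_format, of "adj Ea"]) (auto simp: adj_def)
    have m2: "(adj Eb)\<^sup>*\<^sup>* a b \<Longrightarrow> (adj (Ea \<union> Eb))\<^sup>*\<^sup>* a b" for a b
      by (rule mono_rtranclp[rule_format, of "adj Eb"]) (auto simp: adj_def)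
    have rX: "(adj (Ea \<union> Eb))\<^sup>*\<^sup>* a b" if "a \<in> X" "b \<in> X" for a b
      using m1 cX that unfolding connected_graph_def by blast
    have rY: "(adj (Ea \<union> Eb))\<^sup>*\<^sup>* a b" if "a \<in> Y" "b \<in> Y" for a b
      using m2 cY that unfolding connected_graph_def by blast
    show "connected_graph P (Ea \<union> Eb)"
      unfolding connected_graph_def
    proof (intro ballI)
      fix a b assume "a \<in> P" "b \<in> P"
      then show "(adj (Ea \<union> Eb))\<^sup>*\<^sup>* a b"
        using rX rY vX vY XY(1) by (meson Un_iff rtranclp_trans)
    qed
    show "\<nexists>vs. is_cycle (Ea \<union> Eb) vs" using glue_acyclic[OF tX(1) tY(1) XY(2)] .
  qed
  have cross1: "closed_segment a b \<inter> closed_segment c' d \<subseteq> {a, b} \<inter> {c', d}"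
    if "{a, b} \<in> Eb" "{c', d} \<in> Ea" for a b c' d
  proof
    fix x assume x: "x \<in> closed_segment a b \<inter> closed_segment c' d"
    have ab: "a \<noteq> b" "a \<in> Y" "b \<in> Y" using edge_card[OF gY that(1)] by auto
    have cd: "c' \<noteq> d" "c' \<in> X" "d \<in> X" using edge_card[OF gX that(2)] by auto
    have "lf x \<ge> c" using seg_ge[OF lin, of x a b c] x ab sY by auto
    then have xv: "x = v"
      using seg_le_v[OF lin, of x c' d c v] x cd sX sv by auto
    have "v = a \<or> v = b"
      using seg_endpoint[OF ntc, of a b v] x xv ab XY by auto
    moreover have "v = c' \<or> v = d"
      using seg_endpoint[OF ntc, of c' d v] x xv cd XY by auto
    ultimately show "x \<in> {a, b} \<inter> {c', d}" using xv by auto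
  qed
  show "non_crossing (Ea \<union> Eb)"
    unfolding non_crossing_def
  proof (intro allI impI)
    fix a b c' d
    assume h: "{a, b} \<in> Ea \<union> Eb" "{c', d} \<in> Ea \<union> Eb" "{a, b} \<noteq> {c', d}"
    consider "{a, b} \<in> Ea" "{c', d} \<in> Ea" | "{a, b} \<in> Eb" "{c', d} \<in> Eb"
      | "{a, b} \<in> Eb" "{c', d} \<in> Ea" | "{a, b} \<in> Ea" "{c', d} \<in> Eb" using h by blast
    then show "closed_segment a b \<inter> closed_segment c' d \<subseteq> {a, b} \<inter> {c', d}"
    proof cases
      case 1 then show ?thesis using tX(2) h(3) unfolding non_crossing_def by blast
    next
      case 2 then show ?thesis using tY(2) h(3) unfolding non_crossing_def by blast
    next
      case 3 then show ?thesis using cross1 by blast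
    next
      case 4 then show ?thesis using cross1[of c' d a b] by blast
    qed
  qed
  have finX: "finite X" and finY: "finite Y" using fin XY by auto
  have fa: "finite Ea" using graph_finite[OF gX finX] .
  have fb: "finite Eb" using graph_finite[OF gY finY] .
  have disj: "Ea \<inter> Eb = {}"
  proof (rule ccontr)
    assume "Ea \<inter> Eb \<noteq> {}"
    then obtain e where e: "e \<in> Ea" "e \<in> Eb" by blast
    then have "e \<subseteq> X" "e \<subseteq> Y" "card e = 2" using gX gY unfolding graph_on_def by auto
    then have "e \<subseteq> {v}" using XY(2) by blast
    then have "card e \<le> card {v}" by (intro card_mono) auto
    then have "card e \<le> 1" by simp
    then show False using \<open>card e = 2\<close> by simp
  qed
  have deg: "degree (Ea \<union> Eb) x = degree Ea x + degree Eb x" for x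
  proof -
    have "{e \<in> Ea \<union> Eb. x \<in> e} = {e \<in> Ea. x \<in> e} \<union> {e \<in> Eb. x \<in> e}" by blast
    moreover have "card ({e \<in> Ea. x \<in> e} \<union> {e \<in> Eb. x \<in> e}) =
        card {e \<in> Ea. x \<in> e} + card {e \<in> Eb. x \<in> e}"
      by (rule card_Un_disjoint) (use fa fb disj in auto)
    ultimately show ?thesis unfolding degree_def by simp
  qed
  show "\<forall>x\<in>P. degree (Ea \<union> Eb) x = g x"
  proof
    fix x assume "x \<in> P"
    then consider "x = v" | "x \<in> X - {v}" | "x \<in> Y - {v}" using XY by blast
    then show "degree (Ea \<union> Eb) x = g x"
    proof cases
      case 1 then show ?thesis using deg tX(3) tY(3) gg(3) vX vY by simp
    next
      case 2
      then have "x \<notin> Y" using XY by blast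
      then show ?thesis using deg tX(3) gg(1) degree_out[OF gY] 2 by simp
    next
      case 3
      then have "x \<notin> X" using XY by blast
      then show ?thesis using deg tY(3) gg(2) degree_out[OF gX] 3 by simp
    qed
  qed
qed



lemma extreme_point:
  fixes P :: "point set"
  assumes "finite P" "P \<noteq> {}"
  shows "\<exists>p\<in>P. \<forall>q\<in>P-{p}. fst q > fst p \<or> (fst q = fst p \<and> snd q > snd p)"
proof -
  define mx where "mx = Min (fst ` P)"
  define P0 where "P0 = {q\<in>P. fst q = mx}"
  have "mx \<in> fst ` P" unfolding mx_def using assms by simp
  then have P0ne: "P0 \<noteq> {}" unfolding P0_def by auto
  have finP0: "finite P0" unfolding P0_def using assms by simp
  define my where "my = Min (snd ` P0)"
  have "my \<in> snd ` P0" unfolding my_def using P0ne finP0 by simp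
  then obtain p where p: "p \<in> P0" "snd p = my" by auto
  have pP: "p \<in> P" "fst p = mx" using p unfolding P0_def by auto
  show ?thesis
  proof (intro bexI[OF _ pP(1)] ballI)
    fix q assume q: "q \<in> P - {p}"
    have "fst q \<ge> mx" unfolding mx_def using assms q by simp
    moreover have "fst q = mx \<Longrightarrow> snd q > my"
    proof -
      assume "fst q = mx"
      then have "q \<in> P0" unfolding P0_def using q by simp
      then have "snd q \<ge> my" unfolding my_def using finP0 by simp
      moreover have "snd q \<noteq> my" using q p pP \<open>fst q = mx\<close> by (auto simp: prod_eq_iff)
      ultimately show ?thesis by simp
    qed
    ultimately show "fst q > fst p \<or> (fst q = fst p \<and> snd q > snd p)"
      using pP p by force
  qed
qed

definition hp :: "point \<Rightarrow> bool" where
  "hp u \<longleftrightarrow> fst u > 0 \<or> (fst u = 0 \<and> snd u > 0)"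

lemma cross_anti: "cross u w = - cross w u"
  unfolding cross_def by simp

lemma cross_trans:
  assumes "hp u" "hp v" "hp z" "cross u v > 0" "cross v z > 0" "\<not> (fst u = 0 \<and> fst z = 0)"
  shows "cross u z > 0"
proof -
  have id: "cross u v * fst z + cross v z * fst u = cross u z * fst v"
    unfolding cross_def by (simp add: algebra_simps)
  have vx: "fst v > 0"
  proof (rule ccontr)
    assume "\<not> fst v > 0"
    then have "fst v = 0" "snd v > 0" using assms(2) unfolding hp_def by auto
    then have "cross v z = - snd v * fst z" unfolding cross_def by simp
    moreover have "fst z \<ge> 0" using assms(3) unfolding hp_def by auto
    ultimately have "cross v z \<le> 0" using \<open>snd v > 0\<close> by (simp add: mult_nonneg_nonneg)
    then show False using assms(5) by simp
  qed
  have ux: "fst u \<ge> 0" and zx: "fst z \<ge> 0" using assms(1,3) unfolding hp_def by auto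
  have "cross u v * fst z + cross v z * fst u > 0"
  proof (cases "fst z > 0")
    case True
    then have "cross u v * fst z > 0" using assms(4) by simp
    moreover have "cross v z * fst u \<ge> 0" using assms(5) ux by simp
    ultimately show ?thesis by simp
  next
    case False
    then have "fst u > 0" using assms(6) ux zx by simp
    then have "cross v z * fst u > 0" using assms(5) by simp
    moreover have "cross u v * fst z \<ge> 0" using assms(4) zx by simp
    ultimately show ?thesis by simp
  qed
  then have "cross u z * fst v > 0" using id by simp
  then show ?thesis using vx by (simp add: zero_less_mult_iff)
qed

lemma rank_props:
  fixes R :: "'a \<Rightarrow> 'a \<Rightarrow> bool"
  assumes fin: "finite Q" and irr: "\<forall>q\<in>Q. \<not> R q q"
    and tr: "\<forall>a\<in>Q. \<forall>b\<in>Q. \<forall>c\<in>Q. R a b \<longrightarrow> R b c \<longrightarrow> R a c"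
    and tot: "\<forall>a\<in>Q. \<forall>b\<in>Q. a \<noteq> b \<longrightarrow> R a b \<or> R b a"
  defines "r \<equiv> \<lambda>q. card {x\<in>Q. R x q}"
  shows "\<forall>a\<in>Q. \<forall>b\<in>Q. R a b \<longleftrightarrow> r a < r b"
    and "inj_on r Q" and "r ` Q = {..<card Q}"
proof -
  have lt: "r a < r b" if "a \<in> Q" "b \<in> Q" "R a b" for a b
  proof -
    have "{x\<in>Q. R x a} \<subset> {x\<in>Q. R x b}"
    proof
      show "{x\<in>Q. R x a} \<subseteq> {x\<in>Q. R x b}" using tr that by blast
      show "{x\<in>Q. R x a} \<noteq> {x\<in>Q. R x b}" using that irr by blast
    qed
    moreover have "finite {x\<in>Q. R x b}" using fin by simp
    ultimately have "card {x\<in>Q. R x a} < card {x\<in>Q. R x b}" using psubset_card_mono by blast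
    then show ?thesis unfolding r_def by simp
  qed
  show iff: "\<forall>a\<in>Q. \<forall>b\<in>Q. R a b \<longleftrightarrow> r a < r b"
  proof (intro ballI iffI)
    fix a b assume "a \<in> Q" "b \<in> Q" "R a b" then show "r a < r b" using lt by blast
  next
    fix a b assume h: "a \<in> Q" "b \<in> Q" "r a < r b"
    show "R a b"
    proof (rule ccontr)
      assume "\<not> R a b"
      then have "a = b \<or> R b a" using tot h by blast
      then show False
      proof
        assume "a = b" then show False using h by simp
      next
        assume "R b a" then have "r b < r a" using lt h by blast
        then show False using h by simp
      qed
    qed
  qed
  show inj: "inj_on r Q"
  proof (rule inj_onI)
    fix a b assume h: "a \<in> Q" "b \<in> Q" "r a = r b"
    show "a = b"
    proof (rule ccontr)
      assume "a \<noteq> b"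
      then have "R a b \<or> R b a" using tot h by blast
      then show False
      proof
        assume "R a b" then have "r a < r b" using lt h by blast
        then show False using h by simp
      next
        assume "R b a" then have "r b < r a" using lt h by blast
        then show False using h by simp
      qed
    qed
  qed
  have sub: "r ` Q \<subseteq> {..<card Q}"
  proof
    fix y assume "y \<in> r ` Q"
    then obtain q where q: "q \<in> Q" "y = r q" by blast
    have "{x\<in>Q. R x q} \<subseteq> Q - {q}" using irr q by auto
    moreover have "finite (Q - {q})" using fin by simp
    ultimately have "card {x\<in>Q. R x q} \<le> card (Q - {q})" using card_mono by blast
    then have "r q \<le> card (Q - {q})" unfolding r_def by (simp only:)
    moreover have "card (Q - {q}) < card Q" using card_Diff1_less[OF fin q(1)] .
    ultimately have "r q < card Q" by linarith
    then show "y \<in> {..<card Q}" using q(2) lessThan_iff by blast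
  qed
  have "card (r ` Q) = card Q" using inj card_image by blast
  then show "r ` Q = {..<card Q}"
    using sub card_subset_eq[OF finite_lessThan sub] by simp
qed



lemma sum_upd_out: "a \<notin> A \<Longrightarrow> (\<Sum>x\<in>A. h ((g(a:=n)) x)) = (\<Sum>x\<in>A. h (g x))"
  by (rule sum.cong) auto

lemma card_ge2: "finite X \<Longrightarrow> a \<in> X \<Longrightarrow> b \<in> X \<Longrightarrow> a \<noteq> b \<Longrightarrow> card X \<ge> 2"
proof -
  assume h: "finite X" "a \<in> X" "b \<in> X" "a \<noteq> b"
  then have "card {a, b} \<le> card X" by (intro card_mono) auto
  then show ?thesis using h(4) by simp
qed

lemma base_tree:
  fixes a b :: point
  assumes "a \<noteq> b"
  shows "is_tree {a, b} {{a, b}} \<and> non_crossing {{a, b}} \<and>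
    degree {{a, b}} a = 1 \<and> degree {{a, b}} b = 1"
proof (intro conjI)
  have g: "graph_on {a, b} {{a, b}}" unfolding graph_on_def using assms by auto
  have ab: "adj {{a, b}} a b" "adj {{a, b}} b a" unfolding adj_def using assms
    by (auto simp: insert_commute)
  show "is_tree {a, b} {{a, b}}"
    unfolding is_tree_def
  proof (intro conjI)
    show "graph_on {a, b} {{a, b}}" using g .
    show "connected_graph {a, b} {{a, b}}"
      unfolding connected_graph_def using ab by auto
    show "\<nexists>vs. is_cycle {{a, b}} vs"
    proof
      assume "\<exists>vs. is_cycle {{a, b}} vs"
      then obtain vs where cy: "is_cycle {{a, b}} vs" by blast
      have "set vs \<subseteq> {a, b}" using cycle_in_V[OF cy g] .
      then have "card (set vs) \<le> 2" by (metis card_2_iff assms card_mono finite.emptyI finite.insertI)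
      moreover have "card (set vs) = length vs" using cy unfolding is_cycle_def
        by (simp add: distinct_card)
      ultimately show False using cy unfolding is_cycle_def by simp
    qed
  qed
  show "non_crossing {{a, b}}" unfolding non_crossing_def by auto
  have "{e \<in> {{a, b}}. a \<in> e} = {{a, b}}" by auto
  then show "degree {{a, b}} a = 1" unfolding degree_def by simp
  have "{e \<in> {{a, b}}. b \<in> e} = {{a, b}}" by auto
  then show "degree {{a, b}} b = 1" unfolding degree_def by simp
qed

lemma main:
  fixes P :: "point set" and g :: "point \<Rightarrow> nat"
  assumes "finite P" "card P \<ge> 2" "no_three_collinear P" "\<forall>x\<in>P. g x \<ge> 1"
    "(\<Sum>x\<in>P. int (g x) - 2) = -2"
  shows "\<exists>E. is_tree P E \<and> non_crossing E \<and> (\<forall>x\<in>P. degree E x = g x)"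
  using assms
proof (induction "card P" arbitrary: P g rule: less_induct)
  case less
  note fin = less.prems(1) and c2 = less.prems(2) and ntc = less.prems(3)
    and g1 = less.prems(4) and gs = less.prems(5)
  have IH: "\<exists>E. is_tree X E \<and> non_crossing E \<and> (\<forall>x\<in>X. degree E x = h x)"
    if "X \<subset> P" "card X \<ge> 2" "\<forall>x\<in>X. h x \<ge> 1" "(\<Sum>x\<in>X. int (h x) - 2) = -2" for X h
  proof -
    have "finite X" using that(1) fin finite_subset by blast
    moreover have "card X < card P" using psubset_card_mono[OF fin that(1)] .
    moreover have "no_three_collinear X" using ntc_subset[OF ntc] that(1) by blast
    ultimately show ?thesis using less.hyps that by blast
  qed
  show ?case
  proof (cases "card P = 2")
    case True
    then obtain a b where ab: "P = {a, b}" "a \<noteq> b" by (meson card_2_iff)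
    have "(int (g a) - 2) + (int (g b) - 2) = -2" using gs ab by simp
    moreover have "g a \<ge> 1" "g b \<ge> 1" using g1 ab by auto
    ultimately have "g a = 1" "g b = 1" by linarith+
    then show ?thesis using base_tree[OF ab(2)] ab by auto
  next
    case False
    then have c3: "card P \<ge> 3" using c2 by simp
    have Pne: "P \<noteq> {}" using c2 by auto
    obtain p where pP: "p \<in> P"
      and pext: "\<forall>q\<in>P-{p}. fst q > fst p \<or> (fst q = fst p \<and> snd q > snd p)"
      using extreme_point[OF fin Pne] by blast
    define Q where "Q = P - {p}"
    define M where "M = card Q"
    have finQ: "finite Q" unfolding Q_def using fin by simp
    have pQ: "p \<notin> Q" unfolding Q_def by simp
    have PQ: "P = insert p Q" unfolding Q_def using pP by auto
    have MP: "card P = Suc M" unfolding M_def using PQ finQ pQ by simp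
    have M2: "M \<ge> 2" using c3 MP by simp
    define R where "R = (\<lambda>a b. cross (a - p) (b - p) > 0)"
    have hpQ: "\<forall>q\<in>Q. hp (q - p)" using pext unfolding Q_def hp_def by auto
    have cnz: "cross (a - p) (b - p) \<noteq> 0" if "a \<in> Q" "b \<in> Q" "a \<noteq> b" for a b
      using cross_nz[OF ntc pP, of a b] that pQ unfolding Q_def by auto
    have irr: "\<forall>q\<in>Q. \<not> R q q" unfolding R_def cross_def by simp
    have tot: "\<forall>a\<in>Q. \<forall>b\<in>Q. a \<noteq> b \<longrightarrow> R a b \<or> R b a"
    proof (intro ballI impI)
      fix a b assume "a \<in> Q" "b \<in> Q" "a \<noteq> b"
      then have "cross (a - p) (b - p) \<noteq> 0" using cnz by blast
      then show "R a b \<or> R b a" unfolding R_def using cross_anti[of "a - p" "b - p"] by linarith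
    qed
    have tr: "\<forall>a\<in>Q. \<forall>b\<in>Q. \<forall>c\<in>Q. R a b \<longrightarrow> R b c \<longrightarrow> R a c"
    proof (intro ballI impI)
      fix a b c assume abc: "a \<in> Q" "b \<in> Q" "c \<in> Q" "R a b" "R b c"
      show "R a c"
      proof (cases "a = c")
        case True
        then have "R b a" using abc(5) by simp
        then show ?thesis using abc cross_anti[of "b - p" "a - p"] unfolding R_def by linarith
      next
        case False
        have "\<not> (fst (a - p) = 0 \<and> fst (c - p) = 0)"
        proof
          assume h: "fst (a - p) = 0 \<and> fst (c - p) = 0"
          then have "cross (a - p) (c - p) = 0" unfolding cross_def by simp
          then show False using cnz abc False by blast
        qed
        then show ?thesis using cross_trans[of "a - p" "b - p" "c - p"] abc hpQ
          unfolding R_def by blast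
      qed
    qed
    define r where "r = (\<lambda>q. card {x\<in>Q. R x q})"
    have rk1: "\<forall>a\<in>Q. \<forall>b\<in>Q. R a b \<longleftrightarrow> r a < r b"
      using rank_props(1)[OF finQ irr tr tot] unfolding r_def .
    have rk2: "inj_on r Q"
      using rank_props(2)[OF finQ irr tr tot] unfolding r_def .
    have rk3: "r ` Q = {..<M}"
      using rank_props(3)[OF finQ irr tr tot] unfolding r_def M_def .
    define s where "s k = (SOME q. q \<in> Q \<and> r q = k)" for k
    have s: "s k \<in> Q \<and> r (s k) = k" if "k < M" for k
    proof -
      have "k \<in> r ` Q" using rk3 that by simp
      then have "\<exists>q. q \<in> Q \<and> r q = k" by blast
      then show ?thesis unfolding s_def by (rule someI_ex)
    qed
    have s_uniq: "q = s k" if "q \<in> Q" "r q = k" for q k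
    proof -
      have "k < M" using rk3 that by blast
      then show ?thesis using s[of k] that rk2 unfolding inj_on_def by metis
    qed
    have rlt: "r q < M" if "q \<in> Q" for q using rk3 that by blast
    define w where "w x = int (g x) - 2" for x
    define F where "F k = (\<Sum>x\<in>{x\<in>Q. r x < k}. w x)" for k
    have F0: "F 0 = 0" unfolding F_def by simp
    have FM: "F M = (\<Sum>x\<in>Q. w x)"
    proof -
      have "{x\<in>Q. r x < M} = Q" using rlt by blast
      then show ?thesis unfolding F_def by simp
    qed
    have FS: "F (Suc k) = F k + w (s k)" if "k < M" for k
    proof -
      have "{x\<in>Q. r x < Suc k} = insert (s k) {x\<in>Q. r x < k}"
        using s[OF that] s_uniq less_Suc_eq by blast
      moreover have "s k \<notin> {x\<in>Q. r x < k}" using s[OF that] by simp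
      ultimately show ?thesis unfolding F_def using finQ by (simp add: add.commute)
    qed
    have wge: "w x \<ge> -1" if "x \<in> P" for x using g1 that unfolding w_def by force
    have sumQ: "(\<Sum>x\<in>Q. w x) = -2 - w p"
    proof -
      have "(\<Sum>x\<in>P. w x) = w p + (\<Sum>x\<in>Q. w x)" using PQ finQ pQ by simp
      moreover have "(\<Sum>x\<in>P. w x) = -2" using gs unfolding w_def .
      ultimately show ?thesis by simp
    qed
    have Gsplit: "(\<Sum>x\<in>Q. w x) = F (Suc k) + (\<Sum>x\<in>{x\<in>Q. r x > k}. w x)" for k
    proof -
      have "Q = {x\<in>Q. r x < Suc k} \<union> {x\<in>Q. r x > k}" by auto
      moreover have "{x\<in>Q. r x < Suc k} \<inter> {x\<in>Q. r x > k} = {}" by auto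
      ultimately show ?thesis unfolding F_def using finQ
        by (metis (no_types, lifting) finite_Un sum.union_disjoint)
    qed
    define lf where "lf q x = cross (q - p) (x - p)" for q x
    have lin: "lf q ((1 - t) *\<^sub>R a + t *\<^sub>R b) = (1 - t) * lf q a + t * lf q b" for q a b t
      unfolding lf_def cross_def by (simp add: algebra_simps)
    have linn: "- lf q ((1 - t) *\<^sub>R a + t *\<^sub>R b) = (1 - t) * (- lf q a) + t * (- lf q b)"
      for q a b t using lin[of q t a b] by simp
    have side_lt: "lf q x < 0" if "q \<in> Q" "x \<in> Q" "r x < r q" for q x
    proof -
      have "R x q" using rk1 that by blast
      then show ?thesis unfolding R_def lf_def using cross_anti[of "q - p" "x - p"] by linarith
    qed
    have side_gt: "lf q x > 0" if "q \<in> Q" "x \<in> Q" "r x > r q" for q x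
    proof -
      have "R q x" using rk1 that by blast
      then show ?thesis unfolding R_def lf_def by simp
    qed
    have side_p: "lf q p = 0" for q unfolding lf_def cross_def by simp
    have side_q: "lf q q = 0" for q unfolding lf_def cross_def by simp
    consider "g p \<ge> 2" | "g p = 1" "g (s 0) \<ge> 2" | "g p = 1" "g (s 0) = 1"
      using g1 pP s[of 0] M2 PQ by force
    then show ?thesis
    proof cases
      case 1
      have FMv: "F M = - int (g p)" using FM sumQ unfolding w_def by simp
      have ex: "\<exists>j. F j \<le> -1" using FMv 1 by (intro exI[of _ M]) simp
      define j where "j = (LEAST j. F j \<le> -1)"
      have Fj: "F j \<le> -1" unfolding j_def using LeastI_ex[OF ex] .
      have jM: "j \<le> M" unfolding j_def using Least_le[of "\<lambda>j. F j \<le> -1" M] FMv 1 by simp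
      have j0: "j \<noteq> 0"
      proof
        assume "j = 0" then show False using Fj F0 by simp
      qed
      define k where "k = j - 1"
      have jk: "j = Suc k" using j0 k_def by simp
      have kM: "k < M" using jM jk by simp
      have Fk: "F k > -1"
      proof -
        have "\<not> F k \<le> -1" unfolding j_def[symmetric] using not_less_Least[of k "\<lambda>j. F j \<le> -1"] jk
          unfolding j_def by (metis lessI)
        then show ?thesis by simp
      qed
      define q where "q = s k"
      have qQ: "q \<in> Q" "r q = k" using s[OF kM] unfolding q_def by auto
      have Fj1: "F (Suc k) = -1"
        using FS[OF kM] wge[of q] qQ PQ Fk Fj jk unfolding q_def by auto
      have kM1: "Suc k < M"
      proof (rule ccontr)
        assume "\<not> Suc k < M"
        then have "Suc k = M" using kM by simp
        then show False using Fj1 FMv 1 by simp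
      qed
      define z where "z = s (M - 1)"
      have zQ: "z \<in> Q" "r z = M - 1" using s[of "M - 1"] M2 unfolding z_def by auto
      define X where "X = insert p {x\<in>Q. r x > k}"
      define Y where "Y = insert p {x\<in>Q. r x < Suc k}"
      define gX where "gX = g(p := g p - 1)"
      define gY where "gY = g(p := 1)"
      have XY1: "X \<union> Y = P" unfolding X_def Y_def using PQ by auto
      have XY2: "X \<inter> Y = {p}" unfolding X_def Y_def using pQ by auto
      have XP: "X \<subset> P"
      proof
        show "X \<subseteq> P" using XY1 by blast
        have "q \<notin> X" unfolding X_def using qQ pQ by auto
        then show "X \<noteq> P" using qQ PQ by blast
      qed
      have YP: "Y \<subset> P"
      proof
        show "Y \<subseteq> P" using XY1 by blast
        have "z \<notin> Y" unfolding Y_def using zQ pQ kM1 by auto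
        then show "Y \<noteq> P" using zQ PQ by blast
      qed
      have finX: "finite X" and finY: "finite Y" using XP YP fin finite_subset by blast+
      have cX: "card X \<ge> 2"
        by (rule card_ge2[OF finX, of p z]) (use zQ kM1 pQ in \<open>auto simp: X_def\<close>)
      have cY: "card Y \<ge> 2"
        by (rule card_ge2[OF finY, of p q]) (use qQ pQ in \<open>auto simp: Y_def\<close>)
      have g1X: "\<forall>x\<in>X. gX x \<ge> 1" using g1 XP 1 unfolding gX_def by auto
      have g1Y: "\<forall>x\<in>Y. gY x \<ge> 1" using g1 YP unfolding gY_def by auto
      have sX: "(\<Sum>x\<in>X. int (gX x) - 2) = -2"
      proof -
        have e1: "(\<Sum>x\<in>{x\<in>Q. r x > k}. int (gX x) - 2) = (\<Sum>x\<in>{x\<in>Q. r x > k}. w x)"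
          using pQ by (intro sum.cong) (auto simp: gX_def w_def)
        have "(\<Sum>x\<in>X. int (gX x) - 2) = (int (gX p) - 2) + (\<Sum>x\<in>{x\<in>Q. r x > k}. int (gX x) - 2)"
          unfolding X_def using finQ pQ by simp
        also have "\<dots> = (int (g p) - 3) + (\<Sum>x\<in>{x\<in>Q. r x > k}. w x)"
          using e1 1 unfolding gX_def by simp
        also have "\<dots> = -2" using Gsplit[of k] Fj1 sumQ unfolding w_def by simp
        finally show ?thesis .
      qed
      have sY: "(\<Sum>x\<in>Y. int (gY x) - 2) = -2"
      proof -
        have e1: "(\<Sum>x\<in>{x\<in>Q. r x < Suc k}. int (gY x) - 2) = (\<Sum>x\<in>{x\<in>Q. r x < Suc k}. w x)"
          using pQ by (intro sum.cong) (auto simp: gY_def w_def)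
        have "(\<Sum>x\<in>Y. int (gY x) - 2) = (int (gY p) - 2) + (\<Sum>x\<in>{x\<in>Q. r x < Suc k}. int (gY x) - 2)"
          unfolding Y_def using finQ pQ by simp
        also have "\<dots> = -1 + F (Suc k)" using e1 unfolding gY_def F_def by simp
        finally show ?thesis using Fj1 by simp
      qed
      obtain EXa where EXa: "is_tree X EXa" "non_crossing EXa" "\<forall>x\<in>X. degree EXa x = gX x"
        using IH[OF XP cX g1X sX] by blast
      obtain EYa where EYa: "is_tree Y EYa" "non_crossing EYa" "\<forall>x\<in>Y. degree EYa x = gY x"
        using IH[OF YP cY g1Y sY] by blast
      show ?thesis
      proof (rule glue[OF XY1 XY2 ntc, of "\<lambda>x. - lf q x" 0, OF linn _ _ _ EXa EYa _ _ _ fin])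
        show "\<forall>y\<in>Y. 0 \<le> - lf q y"
        proof
          fix y assume y: "y \<in> Y"
          show "0 \<le> - lf q y"
          proof (cases "y = p \<or> y = q")
            case True then show ?thesis using side_p[of q] side_q[of q] by auto
          next
            case False
            then have yQ: "y \<in> Q" "r y < Suc k" using y unfolding Y_def by auto
            have "r y \<noteq> k"
            proof
              assume "r y = k"
              then have "y = q" using s_uniq[OF yQ(1)] unfolding q_def by blast
              then show False using False by blast
            qed
            then have "r y < r q" using yQ qQ by simp
            then have "lf q y < 0" using side_lt[OF qQ(1) yQ(1)] by blast
            then show ?thesis by simp
          qed
        qed
        show "\<forall>x\<in>X - {p}. - lf q x < 0"
        proof
          fix x assume "x \<in> X - {p}"
          then have "x \<in> Q" "r x > r q" unfolding X_def using qQ by auto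
          then have "lf q x > 0" using side_gt[OF qQ(1)] by blast
          then show "- lf q x < 0" by simp
        qed
        show "- lf q p = 0" using side_p by simp
        show "\<forall>x\<in>X - {p}. g x = gX x" unfolding gX_def by simp
        show "\<forall>y\<in>Y - {p}. g y = gY y" unfolding gY_def by simp
        show "g p = gX p + gY p" unfolding gX_def gY_def using 1 by simp
      qed
    next
      case 2
      have M0: "0 < M" using M2 by simp
      define q where "q = s 0"
      have qQ: "q \<in> Q" "r q = 0" using s[OF M0] unfolding q_def by auto
      have gq: "g q \<ge> 2" using 2 unfolding q_def by simp
      define X where "X = Q"
      define Y where "Y = {p, q}"
      define gX where "gX = g(q := g q - 1)"
      define gY where "gY = (\<lambda>x::point. 1::nat)"
      have pq: "p \<noteq> q" using qQ pQ by auto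
      have XY1: "X \<union> Y = P" unfolding X_def Y_def using PQ qQ by blast
      have XY2: "X \<inter> Y = {q}" unfolding X_def Y_def using pQ qQ by blast
      have XP: "X \<subset> P" unfolding X_def using PQ pQ by blast
      have YP: "Y \<subset> P"
      proof
        show "Y \<subseteq> P" using XY1 by blast
        have "card Y = 2" unfolding Y_def using pq by simp
        then show "Y \<noteq> P"
        proof -
          assume "card Y = 2"
          show "Y \<noteq> P"
          proof
            assume "Y = P" then have "card P = 2" using \<open>card Y = 2\<close> by simp
            then show False using c3 by simp
          qed
        qed
      qed
      have cX: "card X \<ge> 2" unfolding X_def M_def[symmetric] using M2 .
      have cY: "card Y \<ge> 2" unfolding Y_def using pq by simp
      have g1X: "\<forall>x\<in>X. gX x \<ge> 1" using g1 XP gq unfolding gX_def by (auto simp del: One_nat_def)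
      have g1Y: "\<forall>x\<in>Y. gY x \<ge> 1" unfolding gY_def by simp
      have sX: "(\<Sum>x\<in>X. int (gX x) - 2) = -2"
      proof -
        have e1: "(\<Sum>x\<in>Q - {q}. int (gX x) - 2) = (\<Sum>x\<in>Q - {q}. w x)"
          by (intro sum.cong) (auto simp: gX_def w_def)
        have "(\<Sum>x\<in>X. int (gX x) - 2) = (int (gX q) - 2) + (\<Sum>x\<in>Q - {q}. int (gX x) - 2)"
          unfolding X_def by (rule sum.remove[OF finQ qQ(1)])
        also have "\<dots> = (w q - 1) + (\<Sum>x\<in>Q - {q}. w x)"
          using e1 gq unfolding gX_def w_def by simp
        also have "\<dots> = (\<Sum>x\<in>Q. w x) - 1"
          using sum.remove[OF finQ qQ(1), of w] by simp
        also have "\<dots> = -2" using sumQ 2 unfolding w_def by simp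
        finally show ?thesis .
      qed
      have sY: "(\<Sum>x\<in>Y. int (gY x) - 2) = -2"
        unfolding Y_def gY_def using pq by simp
      obtain EXa where EXa: "is_tree X EXa" "non_crossing EXa" "\<forall>x\<in>X. degree EXa x = gX x"
        using IH[OF XP cX g1X sX] by blast
      obtain EYa where EYa: "is_tree Y EYa" "non_crossing EYa" "\<forall>x\<in>Y. degree EYa x = gY x"
        using IH[OF YP cY g1Y sY] by blast
      show ?thesis
      proof (rule glue[OF XY1 XY2 ntc, of "\<lambda>x. - lf q x" 0, OF linn _ _ _ EXa EYa _ _ _ fin])
        show "\<forall>y\<in>Y. 0 \<le> - lf q y"
          unfolding Y_def using side_p[of q] side_q[of q] by auto
        show "\<forall>x\<in>X - {q}. - lf q x < 0"
        proof
          fix x assume x: "x \<in> X - {q}"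
          then have xQ: "x \<in> Q" unfolding X_def by simp
          have "r x \<noteq> 0"
          proof
            assume "r x = 0"
            then have "x = q" using s_uniq[OF xQ] unfolding q_def by blast
            then show False using x by blast
          qed
          then have "r x > r q" using qQ by simp
          then have "lf q x > 0" using side_gt[OF qQ(1) xQ] by blast
          then show "- lf q x < 0" by simp
        qed
        show "- lf q q = 0" using side_q by simp
        show "\<forall>x\<in>X - {q}. g x = gX x" unfolding gX_def by simp
        have "Y - {q} = {p}" unfolding Y_def using pq by blast
        then show "\<forall>y\<in>Y - {q}. g y = gY y" unfolding gY_def using 2 by simp
        show "g q = gX q + gY q" unfolding gX_def gY_def using gq by simp
      qed
    next
      case 3
      have M0: "0 < M" using M2 by simp
      have F1: "F 1 = -1" using FS[OF M0] F0 3 unfolding w_def by simp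
      have FMv: "F M = -1" using FM sumQ 3 unfolding w_def by simp
      define Pk where "Pk k \<longleftrightarrow> k < M \<and> F k \<le> -1" for k
      have P1: "Pk 1" unfolding Pk_def using M2 F1 by simp
      have bnd: "\<And>y. Pk y \<Longrightarrow> y \<le> M" unfolding Pk_def by simp
      define k where "k = Greatest Pk"
      have Pkk: "Pk k" unfolding k_def using GreatestI_nat[of Pk 1 M, OF P1 bnd] .
      have k1: "1 \<le> k" unfolding k_def using Greatest_le_nat[of Pk 1 M, OF P1 bnd] .
      have kM: "k < M" and Fk: "F k \<le> -1" using Pkk unfolding Pk_def by auto
      have Fk1: "F (Suc k) \<ge> -1"
      proof (cases "Suc k < M")
        case True
        have "\<not> Pk (Suc k)"
        proof
          assume "Pk (Suc k)"
          then have "Suc k \<le> Greatest Pk" using Greatest_le_nat[of Pk "Suc k" M] bnd by blast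
          then have "Suc k \<le> k" unfolding k_def .
          then show False by simp
        qed
        then show ?thesis using True unfolding Pk_def by simp
      next
        case False
        then have "Suc k = M" using kM by simp
        then show ?thesis using FMv by simp
      qed
      define q where "q = s k"
      have qQ: "q \<in> Q" "r q = k" using s[OF kM] unfolding q_def by auto
      define z where "z = s 0"
      have zQ: "z \<in> Q" "r z = 0" using s[OF M0] unfolding z_def by auto
      have pq: "p \<noteq> q" using qQ pQ by auto
      have FSk: "F (Suc k) = F k + w q" using FS[OF kM] unfolding q_def .
      define a where "a = nat (- F k)"
      define b where "b = nat (2 + F (Suc k))"
      have a1: "a \<ge> 1" "int a = - F k" unfolding a_def using Fk by auto
      have b1: "b \<ge> 1" "int b = 2 + F (Suc k)" unfolding b_def using Fk1 by auto
      have gqab: "g q = a + b"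
      proof -
        have "int (g q) = int a + int b" using a1 b1 FSk unfolding w_def by simp
        then show ?thesis by linarith
      qed
      define X where "X = insert q {x\<in>Q. r x < k}"
      define Y where "Y = insert p (insert q {x\<in>Q. r x > k})"
      define gX where "gX = g(q := a)"
      define gY where "gY = g(q := b)"
      have XY1: "X \<union> Y = P"
      proof
        show "X \<union> Y \<subseteq> P" unfolding X_def Y_def using PQ qQ by blast
        show "P \<subseteq> X \<union> Y"
        proof
          fix x assume "x \<in> P"
          then have "x = p \<or> (x \<in> Q \<and> (r x < k \<or> r x = k \<or> r x > k))" using PQ by auto
          then show "x \<in> X \<union> Y" unfolding X_def Y_def using s_uniq q_def by blast
        qed
      qed
      have XY2: "X \<inter> Y = {q}" unfolding X_def Y_def using pQ qQ by auto
      have XP: "X \<subset> P"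
      proof
        show "X \<subseteq> P" using XY1 by blast
        have "p \<notin> X" unfolding X_def using pQ qQ by blast
        then show "X \<noteq> P" using pP by blast
      qed
      have YP: "Y \<subset> P"
      proof
        show "Y \<subseteq> P" using XY1 by blast
        have "z \<noteq> q" using zQ qQ k1 by auto
        moreover have "z \<noteq> p" using zQ pQ by auto
        ultimately have "z \<notin> Y" unfolding Y_def using zQ by auto
        then show "Y \<noteq> P" using zQ PQ by blast
      qed
      have finX: "finite X" and finY: "finite Y" using XP YP fin finite_subset by blast+
      have cX: "card X \<ge> 2"
        by (rule card_ge2[OF finX, of q z]) (use zQ qQ k1 in \<open>auto simp: X_def\<close>)
      have cY: "card Y \<ge> 2"
        by (rule card_ge2[OF finY, of p q]) (use pq in \<open>auto simp: Y_def\<close>)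
      have g1X: "\<forall>x\<in>X. gX x \<ge> 1" using g1 XP a1 unfolding gX_def by (auto simp del: One_nat_def)
      have g1Y: "\<forall>x\<in>Y. gY x \<ge> 1" using g1 YP b1 unfolding gY_def by (auto simp del: One_nat_def)
      have sX: "(\<Sum>x\<in>X. int (gX x) - 2) = -2"
      proof -
        have qn: "q \<notin> {x\<in>Q. r x < k}" using qQ by simp
        have e1: "(\<Sum>x\<in>{x\<in>Q. r x < k}. int (gX x) - 2) = (\<Sum>x\<in>{x\<in>Q. r x < k}. w x)"
          using qn by (intro sum.cong) (auto simp: gX_def w_def)
        have "(\<Sum>x\<in>X. int (gX x) - 2) = (int (gX q) - 2) + (\<Sum>x\<in>{x\<in>Q. r x < k}. int (gX x) - 2)"
          unfolding X_def using finQ qn by simp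
        also have "\<dots> = (int a - 2) + F k" using e1 unfolding gX_def F_def by simp
        also have "\<dots> = -2" using a1 by simp
        finally show ?thesis .
      qed
      have sY: "(\<Sum>x\<in>Y. int (gY x) - 2) = -2"
      proof -
        have qn: "q \<notin> {x\<in>Q. r x > k}" using qQ by simp
        have pn: "p \<notin> insert q {x\<in>Q. r x > k}" using pQ pq by simp
        have e1: "(\<Sum>x\<in>{x\<in>Q. r x > k}. int (gY x) - 2) = (\<Sum>x\<in>{x\<in>Q. r x > k}. w x)"
          using qn by (intro sum.cong) (auto simp: gY_def w_def)
        have "(\<Sum>x\<in>Y. int (gY x) - 2) = (int (gY p) - 2) + ((int (gY q) - 2) +
            (\<Sum>x\<in>{x\<in>Q. r x > k}. int (gY x) - 2))"
          unfolding Y_def using finQ qn pn by simp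
        also have "\<dots> = -1 + ((int b - 2) + (\<Sum>x\<in>{x\<in>Q. r x > k}. w x))"
          using e1 pq 3 unfolding gY_def by simp
        also have "\<dots> = -2" using b1 Gsplit[of k] sumQ 3 unfolding w_def by simp
        finally show ?thesis .
      qed
      obtain EXa where EXa: "is_tree X EXa" "non_crossing EXa" "\<forall>x\<in>X. degree EXa x = gX x"
        using IH[OF XP cX g1X sX] by blast
      obtain EYa where EYa: "is_tree Y EYa" "non_crossing EYa" "\<forall>x\<in>Y. degree EYa x = gY x"
        using IH[OF YP cY g1Y sY] by blast
      show ?thesis
      proof (rule glue[OF XY1 XY2 ntc, of "lf q" 0, OF lin _ _ _ EXa EYa _ _ _ fin])
        show "\<forall>y\<in>Y. 0 \<le> lf q y"
        proof
          fix y assume y: "y \<in> Y"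
          show "0 \<le> lf q y"
          proof (cases "y = p \<or> y = q")
            case True then show ?thesis using side_p[of q] side_q[of q] by auto
          next
            case False
            then have yQ: "y \<in> Q" "r y > k" using y unfolding Y_def by auto
            then have "lf q y > 0" using side_gt[OF qQ(1) yQ(1)] qQ by simp
            then show ?thesis by simp
          qed
        qed
        show "\<forall>x\<in>X - {q}. lf q x < 0"
        proof
          fix x assume "x \<in> X - {q}"
          then have xQ: "x \<in> Q" "r x < k" unfolding X_def by auto
          then show "lf q x < 0" using side_lt[OF qQ(1) xQ(1)] qQ by simp
        qed
        show "lf q q = 0" using side_q by simp
        show "\<forall>x\<in>X - {q}. g x = gX x" unfolding gX_def by simp
        show "\<forall>y\<in>Y - {q}. g y = gY y" unfolding gY_def by simp
        show "g q = gX q + gY q" unfolding gX_def gY_def using gqab by simp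
      qed
    qed
  qed
qed

theorem proposition4:
  fixes R B :: "point set" and f :: "point \<Rightarrow> nat"
  assumes "finite R" and "finite B" and "R \<inter> B = {}"
    and "no_three_collinear (R \<union> B)"
    and "\<forall>x\<in>R. f x \<ge> 2"
    and "card B = (\<Sum>x\<in>R. f x - 2) + 2"
  shows "\<exists>E. is_tree (R \<union> B) E \<and> non_crossing E \<and> leaves (R \<union> B) E = B \<and>
           (\<forall>x\<in>R. degree E x = f x)"
proof -
  define g where "g x = (if x \<in> R then f x else 1)" for x
  have fin: "finite (R \<union> B)" using assms(1,2) by simp
  have "card B \<le> card (R \<union> B)" using fin by (intro card_mono) auto
  then have c2: "card (R \<union> B) \<ge> 2" using assms(6) by simp
  have g1: "\<forall>x\<in>R \<union> B. g x \<ge> 1" using assms(5) unfolding g_def by auto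
  have sR: "(\<Sum>x\<in>R. int (g x) - 2) = int (\<Sum>x\<in>R. f x - 2)"
  proof -
    have "(\<Sum>x\<in>R. int (g x) - 2) = (\<Sum>x\<in>R. int (f x - 2))"
      using assms(5) unfolding g_def by (intro sum.cong) auto
    then show ?thesis by (simp add: of_nat_sum)
  qed
  have sB: "(\<Sum>x\<in>B. int (g x) - 2) = - int (card B)"
  proof -
    have "(\<Sum>x\<in>B. int (g x) - 2) = (\<Sum>x\<in>B. -1)"
      using assms(3) unfolding g_def by (intro sum.cong) auto
    then show ?thesis by simp
  qed
  have "(\<Sum>x\<in>R \<union> B. int (g x) - 2) = (\<Sum>x\<in>R. int (g x) - 2) + (\<Sum>x\<in>B. int (g x) - 2)"
    using assms(1-3) by (rule sum.union_disjoint)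
  also have "\<dots> = -2" using sR sB assms(6) by simp
  finally have gs: "(\<Sum>x\<in>R \<union> B. int (g x) - 2) = -2" .
  obtain E where E: "is_tree (R \<union> B) E" "non_crossing E" "\<forall>x\<in>R \<union> B. degree E x = g x"
    using main[OF fin c2 assms(4) g1 gs] by blast
  have "leaves (R \<union> B) E = B"
  proof
    show "leaves (R \<union> B) E \<subseteq> B"
    proof
      fix x assume "x \<in> leaves (R \<union> B) E"
      then have x: "x \<in> R \<union> B" "degree E x = 1" unfolding leaves_def by auto
      show "x \<in> B"
      proof (rule ccontr)
        assume "x \<notin> B"
        then have "x \<in> R" using x by simp
        then have "degree E x = f x" "f x \<ge> 2" using E(3) assms(5) unfolding g_def by auto
        then show False using x by simp
      qed
    qed
    show "B \<subseteq> leaves (R \<union> B) E"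
    proof
      fix x assume "x \<in> B"
      then have "x \<notin> R" using assms(3) by blast
      then have "degree E x = 1" using E(3) \<open>x \<in> B\<close> unfolding g_def by auto
      then show "x \<in> leaves (R \<union> B) E" unfolding leaves_def using \<open>x \<in> B\<close> by simp
    qed
  qed
  moreover have "\<forall>x\<in>R. degree E x = f x" using E(3) unfolding g_def by auto
  ultimately show ?thesis using E by blast
qed

end
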